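(* Let $G$ be a finite group. Then $h\mathrm{aut}(\jmath S(G))\cong\mathrm{Aut}(G)$ as groups.
   Context: For a finite group $G$, $S(G)=(G,[G])$ is the association scheme with $[G]=\{G_f\}_{f\in G}$, $G_f=\{(k,l)\in G\times G\mid k^{-1}l=f\}$. For an association scheme $(X,S)$ (finite set $X$ with a suitable partition $S$ of $X\times X$), the quasi-schemoid $\jmath(X,S)=(\mathcal{C},S)$ has $ob(\mathcal{C})=X$, $\mathrm{Hom}_{\mathcal{C}}(y,x)=\{(x,y)\}$, composition $(z,x)\circ(x,y)=(z,y)$, and partition $S$ of $mor(\mathcal{C})=X\times X$. A quasi-schemoid is a small category with a partition of its morphisms such that for blocks $\sigma,\tau,\mu$ and $f,g\in\mu$ the number of composable pairs $(a,b)\in\sigma\times\tau$ with $a\circ b=f$ equals that with $a\circ b=g$; a morphism of quasi-schemoids is a functor sending each block of the source partition into some block of the target partition. Product: $(\mathcal{C},S)\times(\mathcal{E},S')=(\mathcal{C}\times\mathcal{E},\{\sigma\times\tau\})$. $[1]$ has objects $0,1$ and one non-identity morphism $0\to1$; $I=([1],\{\{f\}\}_f)$. A homotopy $H\colon F\Rightarrow F'$ is a morphism $H\colon(\mathcal{C},S)\times I\to(\mathcal{D},S')$ with $H\circ\varepsilon_0=F$, $H\circ\varepsilon_1=F'$ ($\varepsilon_i(a)=(a,i)$, $\varepsilon_i(f)=(f,1_i)$). $F\sim F'$ means there is a homotopy $F\Rightarrow F'$ or $F'\Rightarrow F$; $F\simeq F'$ means a finite chain $F=F_0\sim\cdots\sim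 F_n=F'$. $h\mathrm{aut}(A)$ is the group of $\simeq$-classes of self-homotopy equivalences of $A$ (morphisms $F\colon A\to A$ with some $F'$ satisfying $FF'\simeq1$, $F'F\simeq1$) under composition. $\mathrm{Aut}(G)$ is the automorphism group of $G$. *)

theory Defs
  imports "HOL-Algebra.Algebra"
begin

text \<open>A small category: object set, morphism set, domain, codomain,
composition (comp g f = g o f when cod f = dom g), identities; together
with a partition Part of the morphism set.\<close>

record ('o, 'm) qschemoid =
  Obj   :: "'o set"
  Mor   :: "'m set"
  qdom  :: "'m \<Rightarrow> 'o"
  qcod  :: "'m \<Rightarrow> 'o"
  qcomp :: "'m \<Rightarrow> 'm \<Rightarrow> 'm"
  qid   :: "'o \<Rightarrow> 'm"
  Part  :: "'m set set"

definition is_category :: "('o, 'm) qschemoid \<Rightarrow> bool" where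
  "is_category C \<longleftrightarrow>
     (\<forall>f\<in>Mor C. qdom C f \<in> Obj C \<and> qcod C f \<in> Obj C) \<and>
     (\<forall>x\<in>Obj C. qid C x \<in> Mor C \<and> qdom C (qid C x) = x \<and> qcod C (qid C x) = x) \<and>
     (\<forall>f\<in>Mor C. \<forall>g\<in>Mor C. qcod C f = qdom C g \<longrightarrow>
        qcomp C g f \<in> Mor C \<and> qdom C (qcomp C g f) = qdom C f \<and> qcod C (qcomp C g f) = qcod C g) \<and>
     (\<forall>f\<in>Mor C. \<forall>g\<in>Mor C. \<forall>h\<in>Mor C. qcod C f = qdom C g \<longrightarrow> qcod C g = qdom C h \<longrightarrow>
        qcomp C h (qcomp C g f) = qcomp C (qcomp C h g) f) \<and>
     (\<forall>f\<in>Mor C. qcomp C (qid C (qcod C f)) f = f \<and> qcomp C f (qid C (qdom C f)) = f)"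

definition is_quasi_schemoid :: "('o, 'm) qschemoid \<Rightarrow> bool" where
  "is_quasi_schemoid C \<longleftrightarrow> is_category C \<and>
     (\<Union>(Part C) = Mor C) \<and> {} \<notin> Part C \<and>
     (\<forall>\<sigma>\<in>Part C. \<forall>\<tau>\<in>Part C. \<sigma> \<noteq> \<tau> \<longrightarrow> \<sigma> \<inter> \<tau> = {}) \<and>
     (\<forall>\<sigma>\<in>Part C. \<forall>\<tau>\<in>Part C. \<forall>\<mu>\<in>Part C. \<forall>f\<in>\<mu>. \<forall>g\<in>\<mu>.
        card {(a, b). a \<in> \<sigma> \<and> b \<in> \<tau> \<and> qcod C b = qdom C a \<and> qcomp C a b = f}
      = card {(a, b). a \<in> \<sigma> \<and> b \<in> \<tau> \<and> qcod C b = qdom C a \<and> qcomp C a b = g})"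

definition group_rel :: "('a, 'b) monoid_scheme \<Rightarrow> 'a \<Rightarrow> ('a \<times> 'a) set" where
  "group_rel G f = {(k, l). k \<in> carrier G \<and> l \<in> carrier G \<and> inv\<^bsub>G\<^esub> k \<otimes>\<^bsub>G\<^esub> l = f}"

definition group_scheme :: "('a, 'b) monoid_scheme \<Rightarrow> 'a set \<times> ('a \<times> 'a) set set" where
  "group_scheme G = (carrier G, group_rel G ` carrier G)"

text \<open>jmath(X,S): objects X, Hom(y,x) = {(x,y)}, (z,x) o (x,y) = (z,y), partition S.\<close>
definition jmath :: "'a set \<times> ('a \<times> 'a) set set \<Rightarrow> ('a, 'a \<times> 'a) qschemoid" where
  "jmath XS = \<lparr> Obj = fst XS, Mor = fst XS \<times> fst XS,
      qdom = snd, qcod = fst,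
      qcomp = (\<lambda>g f. (fst g, snd f)),
      qid = (\<lambda>x. (x, x)),
      Part = snd XS \<rparr>"

record ('o, 'm, 'p, 'n) qfunctor =
  fobj :: "'o \<Rightarrow> 'p"
  fmor :: "'m \<Rightarrow> 'n"

definition qs_morphism :: "('o, 'm) qschemoid \<Rightarrow> ('p, 'n) qschemoid \<Rightarrow> ('o, 'm, 'p, 'n) qfunctor \<Rightarrow> bool" where
  "qs_morphism A B F \<longleftrightarrow>
     fobj F \<in> Obj A \<rightarrow>\<^sub>E Obj B \<and> fmor F \<in> Mor A \<rightarrow>\<^sub>E Mor B \<and>
     (\<forall>f\<in>Mor A. qdom B (fmor F f) = fobj F (qdom A f) \<and> qcod B (fmor F f) = fobj F (qcod A f)) \<and>
     (\<forall>f\<in>Mor A. \<forall>g\<in>Mor A. qcod A f = qdom A g \<longrightarrow>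
        fmor F (qcomp A g f) = qcomp B (fmor F g) (fmor F f)) \<and>
     (\<forall>x\<in>Obj A. fmor F (qid A x) = qid B (fobj F x)) \<and>
     (\<forall>\<sigma>\<in>Part A. \<exists>\<tau>\<in>Part B. fmor F ` \<sigma> \<subseteq> \<tau>)"

definition qs_comp :: "('o, 'm) qschemoid \<Rightarrow> ('p, 'n, 'q, 'k) qfunctor \<Rightarrow> ('o, 'm, 'p, 'n) qfunctor
    \<Rightarrow> ('o, 'm, 'q, 'k) qfunctor" where
  "qs_comp A F G = \<lparr> fobj = compose (Obj A) (fobj F) (fobj G), fmor = compose (Mor A) (fmor F) (fmor G) \<rparr>"

definition qs_id :: "('o, 'm) qschemoid \<Rightarrow> ('o, 'm, 'o, 'm) qfunctor" where
  "qs_id A = \<lparr> fobj = (\<lambda>x\<in>Obj A. x), fmor = (\<lambda>f\<in>Mor A. f) \<rparr>"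

definition qs_prod :: "('o, 'm) qschemoid \<Rightarrow> ('p, 'n) qschemoid \<Rightarrow> ('o \<times> 'p, 'm \<times> 'n) qschemoid" where
  "qs_prod A B = \<lparr> Obj = Obj A \<times> Obj B, Mor = Mor A \<times> Mor B,
      qdom = (\<lambda>(f, g). (qdom A f, qdom B g)),
      qcod = (\<lambda>(f, g). (qcod A f, qcod B g)),
      qcomp = (\<lambda>(f, g) (f', g'). (qcomp A f f', qcomp B g g')),
      qid = (\<lambda>(x, y). (qid A x, qid B y)),
      Part = {\<sigma> \<times> \<tau> | \<sigma> \<tau>. \<sigma> \<in> Part A \<and> \<tau> \<in> Part B} \<rparr>"

text \<open>The category [1]: objects 0,1; a morphism (i,j) is the unique arrow i -> j,
 so the morphisms are (0,0) = 1_0, (1,1) = 1_1 and (0,1) : 0 -> 1.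
 I = ([1], discrete partition).\<close>
definition qsI :: "(nat, nat \<times> nat) qschemoid" where
  "qsI = \<lparr> Obj = {0, 1}, Mor = {(0, 0), (1, 1), (0, 1)},
      qdom = fst, qcod = snd,
      qcomp = (\<lambda>g f. (fst f, snd g)),
      qid = (\<lambda>x. (x, x)),
      Part = {{m} | m. m \<in> {(0, 0), (1, 1), (0, 1)}} \<rparr>"

definition qs_eps :: "('o, 'm) qschemoid \<Rightarrow> nat \<Rightarrow> ('o, 'm, 'o \<times> nat, 'm \<times> (nat \<times> nat)) qfunctor" where
  "qs_eps A i = \<lparr> fobj = (\<lambda>a\<in>Obj A. (a, i)), fmor = (\<lambda>f\<in>Mor A. (f, (i, i))) \<rparr>"

definition qs_homotopy :: "('o, 'm) qschemoid \<Rightarrow> ('p, 'n) qschemoid \<Rightarrow>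
    ('o, 'm, 'p, 'n) qfunctor \<Rightarrow> ('o, 'm, 'p, 'n) qfunctor \<Rightarrow>
    ('o \<times> nat, 'm \<times> (nat \<times> nat), 'p, 'n) qfunctor \<Rightarrow> bool" where
  "qs_homotopy A B F F' H \<longleftrightarrow> qs_morphism (qs_prod A qsI) B H \<and>
     qs_comp A H (qs_eps A 0) = F \<and> qs_comp A H (qs_eps A 1) = F'"

definition qs_sim :: "('o, 'm) qschemoid \<Rightarrow> ('p, 'n) qschemoid \<Rightarrow>
    (('o, 'm, 'p, 'n) qfunctor \<times> ('o, 'm, 'p, 'n) qfunctor) set" where
  "qs_sim A B = {(F, F'). \<exists>H. qs_homotopy A B F F' H \<or> qs_homotopy A B F' F H}"

definition qs_htpc :: "('o, 'm) qschemoid \<Rightarrow> ('p, 'n) qschemoid \<Rightarrow>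
    ('o, 'm, 'p, 'n) qfunctor \<Rightarrow> ('o, 'm, 'p, 'n) qfunctor \<Rightarrow> bool" where
  "qs_htpc A B F F' \<longleftrightarrow> (F, F') \<in> (qs_sim A B)\<^sup>*"

definition self_htpy_equiv :: "('o, 'm) qschemoid \<Rightarrow> ('o, 'm, 'o, 'm) qfunctor set" where
  "self_htpy_equiv A = {F. qs_morphism A A F \<and>
     (\<exists>F'. qs_morphism A A F' \<and> qs_htpc A A (qs_comp A F F') (qs_id A)
                             \<and> qs_htpc A A (qs_comp A F' F) (qs_id A))}"

definition htpy_class :: "('o, 'm) qschemoid \<Rightarrow> ('o, 'm, 'o, 'm) qfunctor \<Rightarrow> ('o, 'm, 'o, 'm) qfunctor set" where
  "htpy_class A F = {G \<in> self_htpy_equiv A. qs_htpc A A F G}"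

definition haut :: "('o, 'm) qschemoid \<Rightarrow> ('o, 'm, 'o, 'm) qfunctor set monoid" where
  "haut A = \<lparr> carrier = htpy_class A ` self_htpy_equiv A,
      monoid.mult = (\<lambda>U V. htpy_class A (qs_comp A (SOME F1. F1 \<in> U) (SOME F2. F2 \<in> V))),
      monoid.one = htpy_class A (qs_id A) \<rparr>"

end

theory Submission
  imports Defs
begin



definition mkF :: "('a,'b) monoid_scheme \<Rightarrow> ('a \<Rightarrow> 'a) \<Rightarrow> ('a, 'a \<times> 'a, 'a, 'a \<times> 'a) qfunctor" where
  "mkF G \<phi> = \<lparr>fobj = (\<lambda>x\<in>carrier G. \<phi> x), fmor = (\<lambda>m\<in>carrier G \<times> carrier G. (\<phi> (fst m), \<phi> (snd m)))\<rparr>"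

definition affP :: "('a,'b) monoid_scheme \<Rightarrow> ('a \<Rightarrow> 'a) \<Rightarrow> bool" where
  "affP G \<phi> \<longleftrightarrow> (\<forall>k\<in>carrier G. \<forall>l\<in>carrier G.
      inv\<^bsub>G\<^esub> (\<phi> k) \<otimes>\<^bsub>G\<^esub> \<phi> l = inv\<^bsub>G\<^esub> (\<phi> \<one>\<^bsub>G\<^esub>) \<otimes>\<^bsub>G\<^esub> \<phi> (inv\<^bsub>G\<^esub> k \<otimes>\<^bsub>G\<^esub> l))"

context group begin

abbreviation "AA \<equiv> jmath (group_scheme G)"

lemma AA_simps[simp]: "Obj AA = carrier G" "Mor AA = carrier G \<times> carrier G"
  "qdom AA = snd" "qcod AA = fst" "qcomp AA = (\<lambda>g f. (fst g, snd f))"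
  "qid AA = (\<lambda>x. (x,x))" "Part AA = group_rel G ` carrier G"
  by (simp_all add: jmath_def group_scheme_def)

lemma group_rel_iff[simp]: "(k,l) \<in> group_rel G f \<longleftrightarrow> k \<in> carrier G \<and> l \<in> carrier G \<and> inv k \<otimes> l = f"
  by (simp add: group_rel_def)

lemma mkF_cong: "(\<And>x. x \<in> carrier G \<Longrightarrow> \<phi> x = \<psi> x) \<Longrightarrow> mkF G \<phi> = mkF G \<psi>"
  unfolding mkF_def by (auto intro!: restrict_ext)

lemma mkF_inj: "mkF G \<phi> = mkF G \<psi> \<Longrightarrow> x \<in> carrier G \<Longrightarrow> \<phi> x = \<psi> x"
proof -
  assume e: "mkF G \<phi> = mkF G \<psi>" and x: "x \<in> carrier G"
  have "fobj (mkF G \<phi>) x = fobj (mkF G \<psi>) x" using e by simp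
  then show ?thesis using x by (simp add: mkF_def)
qed

lemma affP_D: "affP G \<phi> \<Longrightarrow> k \<in> carrier G \<Longrightarrow> l \<in> carrier G \<Longrightarrow>
   inv (\<phi> k) \<otimes> \<phi> l = inv (\<phi> \<one>) \<otimes> \<phi> (inv k \<otimes> l)"
  unfolding affP_def by blast

lemma affP_mult: assumes "affP G \<phi>" "\<phi> \<in> carrier G \<rightarrow> carrier G" "x \<in> carrier G" "y \<in> carrier G"
  shows "\<phi> (x \<otimes> y) = \<phi> x \<otimes> (inv (\<phi> \<one>) \<otimes> \<phi> y)"
proof -
  have h0: "inv (\<phi> x) \<otimes> \<phi> (x \<otimes> y) = inv (\<phi> \<one>) \<otimes> \<phi> (inv x \<otimes> (x \<otimes> y))"
    using assms by (intro affP_D) simp_all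
  have i: "inv x \<otimes> (x \<otimes> y) = y"
  proof -
    have "inv x \<otimes> (x \<otimes> y) = (inv x \<otimes> x) \<otimes> y" by (rule m_assoc[symmetric, OF inv_closed[OF assms(3)] assms(3) assms(4)])
    also have "\<dots> = y" using assms(3,4) by simp
    finally show ?thesis .
  qed
  have h: "inv (\<phi> x) \<otimes> \<phi> (x \<otimes> y) = inv (\<phi> \<one>) \<otimes> \<phi> y" using h0 i by simp
  have c: "\<phi> x \<in> carrier G" "\<phi> (x \<otimes> y) \<in> carrier G" "inv (\<phi> \<one>) \<otimes> \<phi> y \<in> carrier G"
    using funcset_mem[OF assms(2)] assms(3,4) by (simp_all del: Pi_I')
  show ?thesis using inv_solve_left'[OF c(3) c(1) c(2)] h by simp
qed

lemma affP_rtrans: assumes "affP G \<phi>" "\<phi> \<in> carrier G \<rightarrow> carrier G" "d \<in> carrier G"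
  shows "affP G (\<lambda>x. \<phi> x \<otimes> d)"
  unfolding affP_def
proof (intro ballI)
  fix k l assume kl: "k \<in> carrier G" "l \<in> carrier G"
  have e: "inv (\<phi> k) \<otimes> \<phi> l = inv (\<phi> \<one>) \<otimes> \<phi> (inv k \<otimes> l)"
    using assms kl by (intro affP_D) simp_all
  have c: "\<phi> k \<in> carrier G" "\<phi> l \<in> carrier G" "\<phi> \<one> \<in> carrier G" "\<phi> (inv k \<otimes> l) \<in> carrier G"
    using assms kl by auto
  have "inv (\<phi> k \<otimes> d) \<otimes> (\<phi> l \<otimes> d) = inv d \<otimes> (inv (\<phi> k) \<otimes> \<phi> l) \<otimes> d"
    using c assms by (simp add: inv_mult_group m_assoc)
  also have "\<dots> = inv d \<otimes> (inv (\<phi> \<one>) \<otimes> \<phi> (inv k \<otimes> l)) \<otimes> d" by (simp add: e)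
  also have "\<dots> = inv (\<phi> \<one> \<otimes> d) \<otimes> (\<phi> (inv k \<otimes> l) \<otimes> d)"
    using c assms by (simp add: inv_mult_group m_assoc)
  finally show "inv (\<phi> k \<otimes> d) \<otimes> (\<phi> l \<otimes> d) = inv (\<phi> \<one> \<otimes> d) \<otimes> (\<phi> (inv k \<otimes> l) \<otimes> d)" .
qed

lemma hom_affP: assumes "\<sigma> \<in> hom G G" shows "affP G \<sigma>"
proof -
  interpret h: group_hom G G \<sigma> using assms by (simp add: group_hom_def group_hom_axioms_def is_group)
  show ?thesis unfolding affP_def
    by (simp add: h.hom_inv h.hom_mult)
qed

lemma affP_norm_hom: assumes "affP G \<phi>" "\<phi> \<in> carrier G \<rightarrow> carrier G"
  shows "(\<lambda>x\<in>carrier G. \<phi> x \<otimes> inv (\<phi> \<one>)) \<in> hom G G"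
proof (rule homI)
  fix x y assume xy: "x \<in> carrier G" "y \<in> carrier G"
  have c: "\<phi> x \<in> carrier G" "\<phi> y \<in> carrier G" "\<phi> \<one> \<in> carrier G" using assms xy by auto
  show "(\<lambda>x\<in>carrier G. \<phi> x \<otimes> inv (\<phi> \<one>)) (x \<otimes> y) =
        (\<lambda>x\<in>carrier G. \<phi> x \<otimes> inv (\<phi> \<one>)) x \<otimes> (\<lambda>x\<in>carrier G. \<phi> x \<otimes> inv (\<phi> \<one>)) y"
  proof -
    have e: "\<phi> (x \<otimes> y) = \<phi> x \<otimes> (inv (\<phi> \<one>) \<otimes> \<phi> y)" by (rule affP_mult[OF assms xy])
    have "(\<phi> x \<otimes> inv (\<phi> \<one>)) \<otimes> (\<phi> y \<otimes> inv (\<phi> \<one>)) = (\<phi> x \<otimes> (inv (\<phi> \<one>) \<otimes> \<phi> y)) \<otimes> inv (\<phi> \<one>)"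
      using c by (simp add: m_assoc)
    then show ?thesis using xy e by simp
  qed
qed (simp add: funcset_mem[OF assms(2)])

end


context group begin

lemma morph_iff: "qs_morphism AA AA F \<longleftrightarrow>
   (\<exists>\<phi>. \<phi> \<in> carrier G \<rightarrow> carrier G \<and> affP G \<phi> \<and> F = mkF G \<phi>)"
proof
  assume M: "qs_morphism AA AA F"
  define \<phi> where "\<phi> = fobj F"
  have ob: "fobj F \<in> carrier G \<rightarrow>\<^sub>E carrier G" using M unfolding qs_morphism_def AA_simps by blast
  have mo: "fmor F \<in> carrier G \<times> carrier G \<rightarrow>\<^sub>E carrier G \<times> carrier G" using M unfolding qs_morphism_def AA_simps by blast
  have dc0: "\<forall>f\<in>carrier G \<times> carrier G. snd (fmor F f) = fobj F (snd f) \<and> fst (fmor F f) = fobj F (fst f)"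
    using M unfolding qs_morphism_def AA_simps by blast
  have dc: "\<And>a b. a \<in> carrier G \<Longrightarrow> b \<in> carrier G \<Longrightarrow> snd (fmor F (a,b)) = fobj F b \<and> fst (fmor F (a,b)) = fobj F a"
    using dc0 by fastforce
  have pt: "\<And>\<sigma>. \<sigma> \<in> group_rel G ` carrier G \<Longrightarrow> \<exists>\<tau>\<in>group_rel G ` carrier G. fmor F ` \<sigma> \<subseteq> \<tau>"
    using M unfolding qs_morphism_def AA_simps by blast
  have phiG: "\<phi> \<in> carrier G \<rightarrow> carrier G" using ob unfolding \<phi>_def by (simp add: PiE_iff Pi_iff)
  have eqF: "F = mkF G \<phi>"
  proof -
    have "fobj F = (\<lambda>x\<in>carrier G. \<phi> x)" using PiE_restrict[OF ob] unfolding \<phi>_def by simp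
    moreover have "fmor F = (\<lambda>m\<in>carrier G \<times> carrier G. (\<phi> (fst m), \<phi> (snd m)))"
    proof
      fix m show "fmor F m = (\<lambda>m\<in>carrier G \<times> carrier G. (\<phi> (fst m), \<phi> (snd m))) m"
      proof (cases "m \<in> carrier G \<times> carrier G")
        case True then obtain a b where ab: "m = (a,b)" "a \<in> carrier G" "b \<in> carrier G" by blast
        show ?thesis unfolding ab(1) using dc[OF ab(2,3)] ab(2,3) \<phi>_def by (simp add: prod_eq_iff)
      next
        case False then show ?thesis using PiE_arb[OF mo False] False by simp
      qed
    qed
    ultimately show ?thesis unfolding mkF_def by (cases F) simp
  qed
  have "affP G \<phi>" unfolding affP_def
  proof (intro ballI)
    fix k l assume kl: "k \<in> carrier G" "l \<in> carrier G"
    obtain \<tau> where \<tau>: "\<tau> \<in> group_rel G ` carrier G" "fmor F ` group_rel G (inv k \<otimes> l) \<subseteq> \<tau>"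
      using pt[of "group_rel G (inv k \<otimes> l)"] kl by blast
    then obtain g where g: "\<tau> = group_rel G g" by blast
    have "(k,l) \<in> group_rel G (inv k \<otimes> l)" "(\<one>, inv k \<otimes> l) \<in> group_rel G (inv k \<otimes> l)" using kl by simp_all
    then have "fmor F (k,l) \<in> \<tau>" "fmor F (\<one>, inv k \<otimes> l) \<in> \<tau>" using \<tau> by blast+
    moreover have "fmor F (k,l) = (\<phi> k, \<phi> l)" "fmor F (\<one>, inv k \<otimes> l) = (\<phi> \<one>, \<phi> (inv k \<otimes> l))"
      using eqF kl by (simp_all add: mkF_def)
    ultimately show "inv (\<phi> k) \<otimes> \<phi> l = inv (\<phi> \<one>) \<otimes> \<phi> (inv k \<otimes> l)" using g by simp
  qed
  then show "\<exists>\<phi>. \<phi> \<in> carrier G \<rightarrow> carrier G \<and> affP G \<phi> \<and> F = mkF G \<phi>" using phiG eqF by blast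
next
  assume "\<exists>\<phi>. \<phi> \<in> carrier G \<rightarrow> carrier G \<and> affP G \<phi> \<and> F = mkF G \<phi>"
  then obtain \<phi> where phiG: "\<phi> \<in> carrier G \<rightarrow> carrier G" and A: "affP G \<phi>" and F: "F = mkF G \<phi>" by blast
  have part: "\<exists>\<tau>\<in>group_rel G ` carrier G. fmor F ` \<sigma> \<subseteq> \<tau>" if s: "\<sigma> \<in> group_rel G ` carrier G" for \<sigma>
  proof -
    obtain f where f: "f \<in> carrier G" "\<sigma> = group_rel G f" using s by blast
    have "fmor F ` \<sigma> \<subseteq> group_rel G (inv (\<phi> \<one>) \<otimes> \<phi> f)"
    proof
      fix p assume "p \<in> fmor F ` \<sigma>"
      then obtain k l where kl: "k \<in> carrier G" "l \<in> carrier G" "inv k \<otimes> l = f" "p = fmor F (k,l)"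
        using f by auto
      then have "p = (\<phi> k, \<phi> l)" using F by (simp add: mkF_def)
      moreover have "inv (\<phi> k) \<otimes> \<phi> l = inv (\<phi> \<one>) \<otimes> \<phi> f" using affP_D[OF A kl(1,2)] kl(3) by simp
      ultimately show "p \<in> group_rel G (inv (\<phi> \<one>) \<otimes> \<phi> f)" using kl phiG by (simp add: funcset_mem)
    qed
    moreover have "inv (\<phi> \<one>) \<otimes> \<phi> f \<in> carrier G" using phiG f by auto
    ultimately show ?thesis by blast
  qed
  show "qs_morphism AA AA F"
    unfolding qs_morphism_def AA_simps
  proof (intro conjI)
    show "fobj F \<in> carrier G \<rightarrow>\<^sub>E carrier G" using phiG by (simp add: F mkF_def restrict_PiE_iff funcset_mem)
    show "fmor F \<in> carrier G \<times> carrier G \<rightarrow>\<^sub>E carrier G \<times> carrier G"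
      using phiG by (auto simp: F mkF_def restrict_PiE_iff funcset_mem)
    show "\<forall>f\<in>carrier G \<times> carrier G. snd (fmor F f) = fobj F (snd f) \<and> fst (fmor F f) = fobj F (fst f)"
      by (auto simp: F mkF_def)
    show "\<forall>f\<in>carrier G \<times> carrier G. \<forall>g\<in>carrier G \<times> carrier G. fst f = snd g \<longrightarrow>
        fmor F (fst g, snd f) = (fst (fmor F g), snd (fmor F f))"
      by (auto simp: F mkF_def)
    show "\<forall>x\<in>carrier G. fmor F (x, x) = (fobj F x, fobj F x)" by (auto simp: F mkF_def)
    show "\<forall>\<sigma>\<in>group_rel G ` carrier G. \<exists>\<tau>\<in>group_rel G ` carrier G. fmor F ` \<sigma> \<subseteq> \<tau>"
      using part by blast
  qed
qed

end


context group begin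

abbreviation "PP \<equiv> qs_prod AA qsI"

lemma PP_simps[simp]: "Obj PP = carrier G \<times> {0,1}"
  "Mor PP = (carrier G \<times> carrier G) \<times> {(0,0),(1,1),(0,1)}"
  "qdom PP = (\<lambda>(f,g). (snd f, fst g))" "qcod PP = (\<lambda>(f,g). (fst f, snd g))"
  "qcomp PP = (\<lambda>(f,g) (f',g'). ((fst f, snd f'), (fst g', snd g)))"
  "qid PP = (\<lambda>(x,y). ((x,x),(y,y)))"
  "Part PP = {\<sigma> \<times> \<tau> |\<sigma> \<tau>. \<sigma> \<in> group_rel G ` carrier G \<and> \<tau> \<in> {{m} |m. m \<in> {(0,0),(1,1),(0,1)}}}"
  by (simp_all add: qs_prod_def qsI_def)

lemma aff_two: assumes "affP G \<phi>" "\<phi> \<in> carrier G \<rightarrow> carrier G" "a \<in> carrier G" "b \<in> carrier G"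
  "k \<in> carrier G" "l \<in> carrier G"
  shows "inv (\<phi> k \<otimes> a) \<otimes> (\<phi> l \<otimes> b) = inv a \<otimes> (inv (\<phi> \<one>) \<otimes> \<phi> (inv k \<otimes> l)) \<otimes> b"
proof -
  have e: "inv (\<phi> k) \<otimes> \<phi> l = inv (\<phi> \<one>) \<otimes> \<phi> (inv k \<otimes> l)"
    using assms by (intro affP_D) simp_all
  have c: "\<phi> k \<in> carrier G" "\<phi> l \<in> carrier G"
    using funcset_mem[OF assms(2)] assms(5,6) by simp_all
  have "inv (\<phi> k \<otimes> a) \<otimes> (\<phi> l \<otimes> b) = inv a \<otimes> (inv (\<phi> k) \<otimes> \<phi> l) \<otimes> b"
    using c assms(3,4) by (simp add: inv_mult_group m_assoc)
  then show ?thesis by (simp add: e)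
qed

lemma htpy_extract:
  assumes "qs_homotopy AA AA F F' H"
  shows "\<exists>\<phi>0 \<phi>1 c. \<phi>0 \<in> carrier G \<rightarrow> carrier G \<and> c \<in> carrier G \<and> F = mkF G \<phi>0 \<and> F' = mkF G \<phi>1
          \<and> (\<forall>x\<in>carrier G. \<phi>1 x = \<phi>0 x \<otimes> c)"
proof -
  have M: "qs_morphism PP AA H" and F: "F = qs_comp AA H (qs_eps AA 0)" and F': "F' = qs_comp AA H (qs_eps AA 1)"
    using assms unfolding qs_homotopy_def by auto
  have hob: "fobj H \<in> carrier G \<times> {0,1} \<rightarrow>\<^sub>E carrier G"
    using M[unfolded qs_morphism_def, THEN conjunct1] by simp
  note dc0 = M[unfolded qs_morphism_def, THEN conjunct2, THEN conjunct2, THEN conjunct1]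
  have dc: "fmor H ((x,y),m) = (fobj H (x, snd m), fobj H (y, fst m))"
    if "x \<in> carrier G" "y \<in> carrier G" "m \<in> {(0,0),(1,1),(0,1)}" for x y m
  proof -
    have "((x,y),m) \<in> (carrier G \<times> carrier G) \<times> {(0,0),(1,1),(0,1)}" using that by blast
    from dc0[rule_format, OF this[folded PP_simps(2)]] show ?thesis by (simp add: prod_eq_iff)
  qed
  have pt0: "\<forall>\<sigma>\<in>Part PP. \<exists>\<tau>\<in>group_rel G ` carrier G. fmor H ` \<sigma> \<subseteq> \<tau>"
    using M[unfolded qs_morphism_def, THEN conjunct2, THEN conjunct2, THEN conjunct2, THEN conjunct2, THEN conjunct2]
    unfolding AA_simps .
  define \<phi>0 where "\<phi>0 = (\<lambda>x. fobj H (x, 0::nat))"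
  define \<phi>1 where "\<phi>1 = (\<lambda>x. fobj H (x, 1::nat))"
  have p0: "\<phi>0 \<in> carrier G \<rightarrow> carrier G" unfolding \<phi>0_def using hob by (auto simp: PiE_iff)
  have p1: "\<phi>1 \<in> carrier G \<rightarrow> carrier G" unfolding \<phi>1_def using hob by (auto simp: PiE_iff)
  have eF: "qs_comp AA H (qs_eps AA i) = mkF G (\<lambda>x. fobj H (x, i))" if "i = 0 \<or> i = 1" for i
  proof -
    have 1: "compose (carrier G) (fobj H) (\<lambda>a\<in>carrier G. (a, i)) = (\<lambda>x\<in>carrier G. fobj H (x, i))"
      unfolding compose_def by (rule restrict_ext) simp
    have 2: "compose (carrier G \<times> carrier G) (fmor H) (\<lambda>f\<in>carrier G \<times> carrier G. (f, (i, i)))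
        = (\<lambda>m\<in>carrier G \<times> carrier G. (fobj H (fst m, i), fobj H (snd m, i)))"
    proof -
      have ii: "(i,i) \<in> {(0,0),(1,1),(0,1)}" using that by auto
      have "fmor H (m,(i,i)) = (fobj H (fst m, i), fobj H (snd m, i))" if m: "m \<in> carrier G \<times> carrier G" for m
      proof -
        obtain a b where ab: "m = (a,b)" "a \<in> carrier G" "b \<in> carrier G" using m by blast
        show ?thesis unfolding ab(1) using dc[OF ab(2,3) ii] by simp
      qed
      then show ?thesis unfolding compose_def by (intro restrict_ext) simp
    qed
    show ?thesis unfolding qs_comp_def qs_eps_def mkF_def AA_simps using 1 2 by simp
  qed
  have F0: "F = mkF G \<phi>0" unfolding F \<phi>0_def by (rule eF) simp
  have F1: "F' = mkF G \<phi>1" unfolding F' \<phi>1_def by (rule eF) simp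
  have "group_rel G \<one> \<times> {(0,1)} \<in> Part PP" unfolding PP_simps by blast
  then obtain \<tau> where \<tau>: "\<tau> \<in> group_rel G ` carrier G" "fmor H ` (group_rel G \<one> \<times> {(0,1)}) \<subseteq> \<tau>"
    using pt0 by blast
  then obtain g where g: "g \<in> carrier G" "\<tau> = group_rel G g" by blast
  have "\<phi>1 x = \<phi>0 x \<otimes> inv g" if x: "x \<in> carrier G" for x
  proof -
    have "((x,x),(0,1)) \<in> group_rel G \<one> \<times> {(0::nat,1::nat)}" using x by simp
    then have "fmor H ((x,x),(0,1)) \<in> group_rel G g" using \<tau> g by blast
    moreover have "fmor H ((x,x),(0,1)) = (\<phi>1 x, \<phi>0 x)" unfolding \<phi>0_def \<phi>1_def using dc[OF x x] by simp
    ultimately have e: "inv (\<phi>1 x) \<otimes> \<phi>0 x = g" by simp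
    have c: "\<phi>1 x \<in> carrier G" "\<phi>0 x \<in> carrier G" using p0 p1 x by (simp_all add: funcset_mem)
    have "\<phi>0 x = \<phi>1 x \<otimes> g" using e c g(1) inv_solve_left' by blast
    then show ?thesis using c g(1) inv_solve_right by blast
  qed
  then show ?thesis using p0 F0 F1 g(1) by blast
qed

end


context group begin

definition mkH :: "('a \<Rightarrow> 'a) \<Rightarrow> 'a \<Rightarrow> ('a \<times> nat, ('a \<times> 'a) \<times> (nat \<times> nat), 'a, 'a \<times> 'a) qfunctor" where
  "mkH \<phi> d = (let ob = (\<lambda>p\<in>carrier G \<times> {0,1}. \<phi> (fst p) \<otimes> (if snd p = 0 then \<one> else d)) in
     \<lparr>fobj = ob, fmor = (\<lambda>q\<in>(carrier G \<times> carrier G) \<times> {(0,0),(1,1),(0,1)}.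
        (ob (fst (fst q), snd (snd q)), ob (snd (fst q), fst (snd q))))\<rparr>)"

lemma mkH_morph: assumes phiG: "\<phi> \<in> carrier G \<rightarrow> carrier G" and A: "affP G \<phi>" and d: "d \<in> carrier G"
  shows "qs_morphism PP AA (mkH \<phi> d)"
proof -
  define e where "e = (\<lambda>i::nat. if i = 0 then \<one> else d)"
  have eG: "e i \<in> carrier G" for i using d by (simp add: e_def)
  define ob where "ob = (\<lambda>p\<in>carrier G \<times> {0::nat,1}. \<phi> (fst p) \<otimes> e (snd p))"
  have H: "mkH \<phi> d = \<lparr>fobj = ob, fmor = (\<lambda>q\<in>(carrier G \<times> carrier G) \<times> {(0,0),(1,1),(0,1)}.
        (ob (fst (fst q), snd (snd q)), ob (snd (fst q), fst (snd q))))\<rparr>"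
    unfolding mkH_def ob_def e_def Let_def by simp
  have obG: "ob p \<in> carrier G" if "p \<in> carrier G \<times> {0,1}" for p
    using that funcset_mem[OF phiG] eG by (auto simp: ob_def)
  have obv: "ob (x,i) = \<phi> x \<otimes> e i" if "x \<in> carrier G" "i \<in> {0,1}" for x i
    using that by (simp add: ob_def)
  show ?thesis unfolding qs_morphism_def AA_simps PP_simps H qfunctor.simps
  proof (intro conjI)
    show "ob \<in> carrier G \<times> {0, 1} \<rightarrow>\<^sub>E carrier G" using obG by (simp add: ob_def restrict_PiE_iff)
    show "(\<lambda>q\<in>(carrier G \<times> carrier G) \<times> {(0, 0), (1, 1), (0, 1)}.
        (ob (fst (fst q), snd (snd q)), ob (snd (fst q), fst (snd q))))
      \<in> (carrier G \<times> carrier G) \<times> {(0, 0), (1, 1), (0, 1)} \<rightarrow>\<^sub>E carrier G \<times> carrier G"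
      by (auto simp: restrict_PiE_iff intro!: obG)
    show "\<forall>f\<in>(carrier G \<times> carrier G) \<times> {(0, 0), (1, 1), (0, 1)}.
       snd ((\<lambda>q\<in>(carrier G \<times> carrier G) \<times> {(0, 0), (1, 1), (0, 1)}.
                (ob (fst (fst q), snd (snd q)), ob (snd (fst q), fst (snd q)))) f) =
       ob (case f of (f, g) \<Rightarrow> (snd f, fst g)) \<and>
       fst ((\<lambda>q\<in>(carrier G \<times> carrier G) \<times> {(0, 0), (1, 1), (0, 1)}.
                (ob (fst (fst q), snd (snd q)), ob (snd (fst q), fst (snd q)))) f) =
       ob (case f of (f, g) \<Rightarrow> (fst f, snd g))"
      by auto
    show "\<forall>f\<in>(carrier G \<times> carrier G) \<times> {(0, 0), (1, 1), (0, 1)}.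
       \<forall>g\<in>(carrier G \<times> carrier G) \<times> {(0, 0), (1, 1), (0, 1)}.
          (case f of (f, g) \<Rightarrow> (fst f, snd g)) = (case g of (f, g) \<Rightarrow> (snd f, fst g)) \<longrightarrow>
          (\<lambda>q\<in>(carrier G \<times> carrier G) \<times> {(0, 0), (1, 1), (0, 1)}.
              (ob (fst (fst q), snd (snd q)), ob (snd (fst q), fst (snd q))))
           ((case g of (f, g) \<Rightarrow> \<lambda>(f', g'). ((fst f, snd f'), fst g', snd g)) f) =
          (fst ((\<lambda>q\<in>(carrier G \<times> carrier G) \<times> {(0, 0), (1, 1), (0, 1)}.
                    (ob (fst (fst q), snd (snd q)), ob (snd (fst q), fst (snd q))))
                 g),
           snd ((\<lambda>q\<in>(carrier G \<times> carrier G) \<times> {(0, 0), (1, 1), (0, 1)}.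
                    (ob (fst (fst q), snd (snd q)), ob (snd (fst q), fst (snd q))))
                 f))"
      by auto
    show "\<forall>x\<in>carrier G \<times> {0, 1}.
       (\<lambda>q\<in>(carrier G \<times> carrier G) \<times> {(0, 0), (1, 1), (0, 1)}.
           (ob (fst (fst q), snd (snd q)), ob (snd (fst q), fst (snd q))))
        ((case x of (x, y) \<Rightarrow> ((x, x), y, y))) = (ob x, ob x)"
      by auto
    show "\<forall>\<sigma>\<in>{\<sigma> \<times> \<tau> |\<sigma> \<tau>. \<sigma> \<in> group_rel G ` carrier G \<and> \<tau> \<in> {{m} |m. m \<in> {(0, 0), (1, 1), (0, 1)}}}.
       \<exists>\<tau>\<in>group_rel G ` carrier G.
          (\<lambda>q\<in>(carrier G \<times> carrier G) \<times> {(0, 0), (1, 1), (0, 1)}.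
              (ob (fst (fst q), snd (snd q)), ob (snd (fst q), fst (snd q)))) ` \<sigma> \<subseteq> \<tau>"
    proof
      fix S assume "S \<in> {\<sigma> \<times> \<tau> |\<sigma> \<tau>. \<sigma> \<in> group_rel G ` carrier G \<and> \<tau> \<in> {{m} |m. m \<in> {(0::nat, 0::nat), (1, 1), (0, 1)}}}"
      then obtain f i j where S: "S = group_rel G f \<times> {(i,j)}" "f \<in> carrier G" "(i,j) \<in> {(0::nat, 0::nat), (1, 1), (0, 1)}"
        by blast
      have ij: "i \<in> {0,1}" "j \<in> {0,1}" using S(3) by auto
      define g where "g = inv (e j) \<otimes> (inv (\<phi> \<one>) \<otimes> \<phi> f) \<otimes> e i"
      have gG: "g \<in> carrier G" unfolding g_def using eG S(2) funcset_mem[OF phiG] by simp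
      have "(\<lambda>q\<in>(carrier G \<times> carrier G) \<times> {(0, 0), (1, 1), (0, 1)}.
              (ob (fst (fst q), snd (snd q)), ob (snd (fst q), fst (snd q)))) ` S \<subseteq> group_rel G g"
      proof
        fix p assume "p \<in> (\<lambda>q\<in>(carrier G \<times> carrier G) \<times> {(0, 0), (1, 1), (0, 1)}.
              (ob (fst (fst q), snd (snd q)), ob (snd (fst q), fst (snd q)))) ` S"
        then obtain k l where kl: "k \<in> carrier G" "l \<in> carrier G" "inv k \<otimes> l = f"
          and p: "p = (ob (k, j), ob (l, i))" using S by auto
        have "inv (\<phi> k \<otimes> e j) \<otimes> (\<phi> l \<otimes> e i) = g"
          unfolding g_def using aff_two[OF A phiG eG eG kl(1,2)] kl(3) by simp
        moreover have "\<phi> k \<otimes> e j \<in> carrier G" "\<phi> l \<otimes> e i \<in> carrier G"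
          using funcset_mem[OF phiG] kl eG by simp_all
        ultimately show "p \<in> group_rel G g" unfolding p using obv kl ij by simp
      qed
      then show "\<exists>\<tau>\<in>group_rel G ` carrier G. (\<lambda>q\<in>(carrier G \<times> carrier G) \<times> {(0, 0), (1, 1), (0, 1)}.
              (ob (fst (fst q), snd (snd q)), ob (snd (fst q), fst (snd q)))) ` S \<subseteq> \<tau>"
        using gG by blast
    qed
  qed
qed

end


context group begin

lemma mkH_eps: assumes "i = 0 \<or> i = 1"
  shows "qs_comp AA (mkH \<phi> d) (qs_eps AA i) = mkF G (\<lambda>x. \<phi> x \<otimes> (if i = 0 then \<one> else d))"
proof -
  have 1: "compose (carrier G) (fobj (mkH \<phi> d)) (\<lambda>a\<in>carrier G. (a, i)) = (\<lambda>x\<in>carrier G. \<phi> x \<otimes> (if i = 0 then \<one> else d))"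
    unfolding compose_def using assms by (intro restrict_ext) (auto simp: mkH_def Let_def)
  have 2: "compose (carrier G \<times> carrier G) (fmor (mkH \<phi> d)) (\<lambda>f\<in>carrier G \<times> carrier G. (f, (i, i)))
     = (\<lambda>m\<in>carrier G \<times> carrier G. (\<phi> (fst m) \<otimes> (if i = 0 then \<one> else d), \<phi> (snd m) \<otimes> (if i = 0 then \<one> else d)))"
    unfolding compose_def using assms by (intro restrict_ext) (auto simp: mkH_def Let_def)
  show ?thesis unfolding qs_comp_def qs_eps_def mkF_def AA_simps using 1 2 by simp
qed

lemma mkH_htpy: assumes "\<phi> \<in> carrier G \<rightarrow> carrier G" "affP G \<phi>" "d \<in> carrier G"
  shows "qs_homotopy AA AA (mkF G \<phi>) (mkF G (\<lambda>x. \<phi> x \<otimes> d)) (mkH \<phi> d)"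
proof -
  have "qs_comp AA (mkH \<phi> d) (qs_eps AA 0) = mkF G (\<lambda>x. \<phi> x \<otimes> \<one>)" using mkH_eps[of 0] by simp
  also have "\<dots> = mkF G \<phi>" using assms(1) by (intro mkF_cong) (simp add: funcset_mem)
  finally have 0: "qs_comp AA (mkH \<phi> d) (qs_eps AA 0) = mkF G \<phi>" .
  have 1: "qs_comp AA (mkH \<phi> d) (qs_eps AA 1) = mkF G (\<lambda>x. \<phi> x \<otimes> d)" using mkH_eps[of 1] by simp
  show ?thesis unfolding qs_homotopy_def using mkH_morph[OF assms] 0 1 by simp
qed

lemma sim_sym: "(F, F') \<in> qs_sim A B \<Longrightarrow> (F', F) \<in> qs_sim A B"
  by (auto simp: qs_sim_def)

lemma htpc_refl: "qs_htpc A B F F" by (simp add: qs_htpc_def)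

lemma htpc_sym: assumes "qs_htpc A B F F'" shows "qs_htpc A B F' F"
proof -
  have "sym (qs_sim A B)" by (auto intro: symI sim_sym)
  then have "sym ((qs_sim A B)\<^sup>*)" by (rule sym_rtrancl)
  then show ?thesis using assms unfolding qs_htpc_def by (auto dest: symD)
qed

lemma htpc_trans: "qs_htpc A B F F' \<Longrightarrow> qs_htpc A B F' F'' \<Longrightarrow> qs_htpc A B F F''"
  unfolding qs_htpc_def by (rule rtrancl_trans)

lemma htpc_iff: assumes phiG: "\<phi> \<in> carrier G \<rightarrow> carrier G" and A: "affP G \<phi>"
  shows "qs_htpc AA AA (mkF G \<phi>) F' \<longleftrightarrow> (\<exists>d\<in>carrier G. F' = mkF G (\<lambda>x. \<phi> x \<otimes> d))"
proof
  assume "qs_htpc AA AA (mkF G \<phi>) F'"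
  then have "(mkF G \<phi>, F') \<in> (qs_sim AA AA)\<^sup>*" unfolding qs_htpc_def .
  then show "\<exists>d\<in>carrier G. F' = mkF G (\<lambda>x. \<phi> x \<otimes> d)"
  proof (induction rule: rtrancl_induct)
    case base
    have "mkF G \<phi> = mkF G (\<lambda>x. \<phi> x \<otimes> \<one>)" using phiG by (intro mkF_cong) (simp add: funcset_mem)
    then show ?case by blast
  next
    case (step y z)
    from step.IH obtain d1 where d1: "d1 \<in> carrier G" "y = mkF G (\<lambda>x. \<phi> x \<otimes> d1)" by blast
    from step.hyps(2) obtain H where "qs_homotopy AA AA y z H \<or> qs_homotopy AA AA z y H"
      unfolding qs_sim_def by blast
    then show ?case
    proof
      assume "qs_homotopy AA AA y z H"
      from htpy_extract[OF this] obtain \<phi>0 \<phi>1 c where h: "\<phi>0 \<in> carrier G \<rightarrow> carrier G" "c \<in> carrier G"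
        "y = mkF G \<phi>0" "z = mkF G \<phi>1" "\<forall>x\<in>carrier G. \<phi>1 x = \<phi>0 x \<otimes> c" by blast
      have "z = mkF G (\<lambda>x. \<phi> x \<otimes> (d1 \<otimes> c))"
        unfolding h(4)
      proof (rule mkF_cong)
        fix x assume x: "x \<in> carrier G"
        have "\<phi>0 x = \<phi> x \<otimes> d1" using mkF_inj[of \<phi>0 "\<lambda>x. \<phi> x \<otimes> d1", OF _ x] h(3) d1(2) by simp
        then show "\<phi>1 x = \<phi> x \<otimes> (d1 \<otimes> c)" using h(5) x d1(1) h(2) funcset_mem[OF phiG x] by (simp add: m_assoc)
      qed
      then show ?thesis using d1(1) h(2) by blast
    next
      assume "qs_homotopy AA AA z y H"
      from htpy_extract[OF this] obtain \<phi>0 \<phi>1 c where h: "\<phi>0 \<in> carrier G \<rightarrow> carrier G" "c \<in> carrier G"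
        "z = mkF G \<phi>0" "y = mkF G \<phi>1" "\<forall>x\<in>carrier G. \<phi>1 x = \<phi>0 x \<otimes> c" by blast
      have "z = mkF G (\<lambda>x. \<phi> x \<otimes> (d1 \<otimes> inv c))"
        unfolding h(3)
      proof (rule mkF_cong)
        fix x assume x: "x \<in> carrier G"
        have e1: "\<phi>1 x = \<phi> x \<otimes> d1" using mkF_inj[of \<phi>1 "\<lambda>x. \<phi> x \<otimes> d1", OF _ x] h(4) d1(2) by simp
        have c0: "\<phi>0 x \<in> carrier G" using h(1) x by (simp add: funcset_mem)
        have c1: "\<phi>1 x \<in> carrier G" using e1 funcset_mem[OF phiG x] d1(1) by simp
        have "\<phi>0 x = \<phi>1 x \<otimes> inv c" using inv_solve_right[OF c0 c1 h(2)] h(5) x by simp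
        then show "\<phi>0 x = \<phi> x \<otimes> (d1 \<otimes> inv c)" using e1 x d1(1) h(2) funcset_mem[OF phiG x] by (simp add: m_assoc)
      qed
      then show ?thesis using d1(1) h(2) by blast
    qed
  qed
next
  assume "\<exists>d\<in>carrier G. F' = mkF G (\<lambda>x. \<phi> x \<otimes> d)"
  then obtain d where d: "d \<in> carrier G" "F' = mkF G (\<lambda>x. \<phi> x \<otimes> d)" by blast
  have "(mkF G \<phi>, F') \<in> qs_sim AA AA" unfolding qs_sim_def using mkH_htpy[OF phiG A d(1)] d(2) by blast
  then show "qs_htpc AA AA (mkF G \<phi>) F'" unfolding qs_htpc_def by blast
qed

end


context group begin

lemma comp_mkF: assumes psi: "\<psi> \<in> carrier G \<rightarrow> carrier G"
  shows "qs_comp AA (mkF G \<phi>) (mkF G \<psi>) = mkF G (\<lambda>x. \<phi> (\<psi> x))"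
proof -
  have 1: "compose (carrier G) (\<lambda>x\<in>carrier G. \<phi> x) (\<lambda>x\<in>carrier G. \<psi> x) = (\<lambda>x\<in>carrier G. \<phi> (\<psi> x))"
    unfolding compose_def by (rule restrict_ext) (simp add: funcset_mem[OF psi])
  have 2: "compose (carrier G \<times> carrier G) (\<lambda>m\<in>carrier G \<times> carrier G. (\<phi> (fst m), \<phi> (snd m)))
      (\<lambda>m\<in>carrier G \<times> carrier G. (\<psi> (fst m), \<psi> (snd m)))
     = (\<lambda>m\<in>carrier G \<times> carrier G. (\<phi> (\<psi> (fst m)), \<phi> (\<psi> (snd m))))"
    unfolding compose_def
  proof (rule restrict_ext)
    fix m assume m: "m \<in> carrier G \<times> carrier G"
    then have "(\<psi> (fst m), \<psi> (snd m)) \<in> carrier G \<times> carrier G"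
      using funcset_mem[OF psi] by (simp add: mem_Times_iff)
    then show "(\<lambda>m\<in>carrier G \<times> carrier G. (\<phi> (fst m), \<phi> (snd m)))
        ((\<lambda>m\<in>carrier G \<times> carrier G. (\<psi> (fst m), \<psi> (snd m))) m) = (\<phi> (\<psi> (fst m)), \<phi> (\<psi> (snd m)))"
      using m by simp
  qed
  show ?thesis unfolding qs_comp_def mkF_def AA_simps using 1 2 by simp
qed

lemma id_mkF: "qs_id AA = mkF G (\<lambda>x. x)"
  unfolding qs_id_def mkF_def AA_simps by simp

lemma id_hom: "(\<lambda>x. x) \<in> hom G G" by (simp add: hom_def)

lemma auto_facts: assumes "\<sigma> \<in> auto G"
  shows "\<sigma> \<in> hom G G" "\<sigma> \<in> carrier G \<rightarrow> carrier G" "affP G \<sigma>" "bij_betw \<sigma> (carrier G) (carrier G)"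
    "\<sigma> \<in> extensional (carrier G)"
proof -
  show h: "\<sigma> \<in> hom G G" using assms unfolding auto_def by blast
  show "\<sigma> \<in> carrier G \<rightarrow> carrier G" using h unfolding hom_def by blast
  show "affP G \<sigma>" by (rule hom_affP[OF h])
  show "bij_betw \<sigma> (carrier G) (carrier G)" using assms unfolding auto_def Bij_def by blast
  show "\<sigma> \<in> extensional (carrier G)" using assms unfolding auto_def Bij_def by blast
qed

lemma she_char: assumes "F \<in> self_htpy_equiv AA"
  shows "\<exists>\<phi>. \<phi> \<in> carrier G \<rightarrow> carrier G \<and> affP G \<phi> \<and> F = mkF G \<phi> \<and>
          (\<lambda>x\<in>carrier G. \<phi> x \<otimes> inv (\<phi> \<one>)) \<in> auto G"
proof -
  from assms obtain F' where M: "qs_morphism AA AA F" and M': "qs_morphism AA AA F'"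
    and h1: "qs_htpc AA AA (qs_comp AA F F') (qs_id AA)" and h2: "qs_htpc AA AA (qs_comp AA F' F) (qs_id AA)"
    unfolding self_htpy_equiv_def by blast
  from M obtain \<phi> where p: "\<phi> \<in> carrier G \<rightarrow> carrier G" "affP G \<phi>" "F = mkF G \<phi>" unfolding morph_iff by blast
  from M' obtain \<phi>' where p': "\<phi>' \<in> carrier G \<rightarrow> carrier G" "affP G \<phi>'" "F' = mkF G \<phi>'" unfolding morph_iff by blast
  have idG: "(\<lambda>x. x) \<in> carrier G \<rightarrow> carrier G" by simp
  have idA: "affP G (\<lambda>x. x)" by (rule hom_affP[OF id_hom])
  have "qs_htpc AA AA (mkF G (\<lambda>x. x)) (mkF G (\<lambda>x. \<phi> (\<phi>' x)))"
    using htpc_sym[OF h1] unfolding p(3) p'(3) comp_mkF[OF p'(1)] id_mkF .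
  then obtain d where d: "d \<in> carrier G" "mkF G (\<lambda>x. \<phi> (\<phi>' x)) = mkF G (\<lambda>x. x \<otimes> d)"
    unfolding htpc_iff[OF idG idA] by blast
  have e1: "\<phi> (\<phi>' x) = x \<otimes> d" if "x \<in> carrier G" for x using mkF_inj[OF d(2) that] .
  have "qs_htpc AA AA (mkF G (\<lambda>x. x)) (mkF G (\<lambda>x. \<phi>' (\<phi> x)))"
    using htpc_sym[OF h2] unfolding p(3) p'(3) comp_mkF[OF p(1)] id_mkF .
  then obtain d' where d': "d' \<in> carrier G" "mkF G (\<lambda>x. \<phi>' (\<phi> x)) = mkF G (\<lambda>x. x \<otimes> d')"
    unfolding htpc_iff[OF idG idA] by blast
  have e2: "\<phi>' (\<phi> x) = x \<otimes> d'" if "x \<in> carrier G" for x using mkF_inj[OF d'(2) that] .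
  define \<psi> where "\<psi> = (\<lambda>x\<in>carrier G. \<phi> x \<otimes> inv (\<phi> \<one>))"
  have c1: "\<phi> \<one> \<in> carrier G" using p(1) by (simp add: funcset_mem)
  have hom: "\<psi> \<in> hom G G" unfolding \<psi>_def by (rule affP_norm_hom[OF p(2,1)])
  have inj: "inj_on \<psi> (carrier G)"
  proof (rule inj_onI)
    fix x y assume xy: "x \<in> carrier G" "y \<in> carrier G" "\<psi> x = \<psi> y"
    have cx: "\<phi> x \<in> carrier G" "\<phi> y \<in> carrier G" using p(1) xy by (simp_all add: funcset_mem)
    then have "\<phi> x = \<phi> y" using xy c1 unfolding \<psi>_def by simp
    then have "x \<otimes> d' = y \<otimes> d'" using e2[OF xy(1)] e2[OF xy(2)] by (simp del: right_cancel)
    then show "x = y" using xy d' by simp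
  qed
  have surj: "\<psi> ` carrier G = carrier G"
  proof
    show "\<psi> ` carrier G \<subseteq> carrier G" by (rule hom_carrier[OF hom])
    show "carrier G \<subseteq> \<psi> ` carrier G"
    proof
      fix y assume y: "y \<in> carrier G"
      define x where "x = \<phi>' (y \<otimes> \<phi> \<one> \<otimes> inv d)"
      have xG: "x \<in> carrier G" unfolding x_def using y c1 d(1) by (intro funcset_mem[OF p'(1)]) simp
      have "\<phi> x = y \<otimes> \<phi> \<one> \<otimes> inv d \<otimes> d" unfolding x_def by (rule e1) (use y c1 d(1) in simp)
      also have "\<dots> = y \<otimes> \<phi> \<one>" using y c1 d(1) by (simp add: m_assoc)
      finally have fx: "\<phi> x = y \<otimes> \<phi> \<one>" .
      have "\<psi> x = \<phi> x \<otimes> inv (\<phi> \<one>)" unfolding \<psi>_def using xG by simp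
      also have "\<dots> = (y \<otimes> \<phi> \<one>) \<otimes> inv (\<phi> \<one>)" by (simp only: fx)
      also have "\<dots> = y" using y c1 by (simp add: m_assoc)
      finally have "\<psi> x = y" .
      then have "y = \<psi> x" by simp
      then show "y \<in> \<psi> ` carrier G" using xG by (rule image_eqI)
    qed
  qed
  have ext: "\<psi> \<in> extensional (carrier G)" unfolding \<psi>_def by (rule restrict_extensional)
  have "bij_betw \<psi> (carrier G) (carrier G)" using inj surj by (rule bij_betw_imageI)
  then have "\<psi> \<in> auto G" unfolding auto_def Bij_def using hom ext by blast
  then show ?thesis using p unfolding \<psi>_def by blast
qed

end


context group begin

lemma AG_carrier: "carrier (AutoGroup G) = auto G" by (simp add: AutoGroup_def BijGroup_def)
lemma AG_mult: "\<sigma> \<in> auto G \<Longrightarrow> \<tau> \<in> auto G \<Longrightarrow> \<sigma> \<otimes>\<^bsub>AutoGroup G\<^esub> \<tau> = compose (carrier G) \<sigma> \<tau>"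
  by (simp add: AutoGroup_def BijGroup_def auto_def)
lemma AG_one: "\<one>\<^bsub>AutoGroup G\<^esub> = (\<lambda>x\<in>carrier G. x)" by (simp add: AutoGroup_def BijGroup_def)

lemma haut_mult: "U \<otimes>\<^bsub>haut A\<^esub> V = htpy_class A (qs_comp A (SOME F1. F1 \<in> U) (SOME F2. F2 \<in> V))"
  by (simp add: haut_def)

lemma class_eq: assumes h: "qs_htpc AA AA F1 F2" shows "htpy_class AA F1 = htpy_class AA F2"
proof -
  have "qs_htpc AA AA F1 Fx \<longleftrightarrow> qs_htpc AA AA F2 Fx" for Fx
    using htpc_trans[OF h, of Fx] htpc_trans[OF htpc_sym[OF h], of Fx] by blast
  then show ?thesis unfolding htpy_class_def by simp
qed

lemma class_self: "F \<in> self_htpy_equiv AA \<Longrightarrow> F \<in> htpy_class AA F"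
  unfolding htpy_class_def using htpc_refl by blast

lemma some_in: "F \<in> self_htpy_equiv AA \<Longrightarrow> (SOME F1. F1 \<in> htpy_class AA F) \<in> htpy_class AA F"
  by (rule someI) (rule class_self)

lemma auto_she: assumes s: "\<sigma> \<in> auto G" shows "mkF G \<sigma> \<in> self_htpy_equiv AA"
proof -
  interpret AG: group "AutoGroup G" by (rule AutoGroup)
  define \<tau> where "\<tau> = inv\<^bsub>AutoGroup G\<^esub> \<sigma>"
  have sC: "\<sigma> \<in> carrier (AutoGroup G)" using s AG_carrier by simp
  have t: "\<tau> \<in> auto G" unfolding \<tau>_def using AG.inv_closed[OF sC] AG_carrier by simp
  have st: "compose (carrier G) \<sigma> \<tau> = (\<lambda>x\<in>carrier G. x)"
    using AG.r_inv[OF sC] AG_mult[OF s t] AG_one unfolding \<tau>_def by simp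
  have ts: "compose (carrier G) \<tau> \<sigma> = (\<lambda>x\<in>carrier G. x)"
    using AG.l_inv[OF sC] AG_mult[OF t s] AG_one unfolding \<tau>_def by simp
  have m1: "qs_morphism AA AA (mkF G \<sigma>)" unfolding morph_iff using auto_facts[OF s] by blast
  have m2: "qs_morphism AA AA (mkF G \<tau>)" unfolding morph_iff using auto_facts[OF t] by blast
  have c1: "qs_comp AA (mkF G \<sigma>) (mkF G \<tau>) = qs_id AA"
  proof -
    have "qs_comp AA (mkF G \<sigma>) (mkF G \<tau>) = mkF G (\<lambda>x. \<sigma> (\<tau> x))" by (rule comp_mkF[OF auto_facts(2)[OF t]])
    also have "\<dots> = mkF G (\<lambda>x. x)"
    proof (rule mkF_cong)
      fix x assume x: "x \<in> carrier G"
      have "compose (carrier G) \<sigma> \<tau> x = (\<lambda>x\<in>carrier G. x) x" by (simp only: st)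
      then show "\<sigma> (\<tau> x) = x" using x by (simp add: compose_def)
    qed
    finally show ?thesis by (simp add: id_mkF)
  qed
  have c2: "qs_comp AA (mkF G \<tau>) (mkF G \<sigma>) = qs_id AA"
  proof -
    have "qs_comp AA (mkF G \<tau>) (mkF G \<sigma>) = mkF G (\<lambda>x. \<tau> (\<sigma> x))" by (rule comp_mkF[OF auto_facts(2)[OF s]])
    also have "\<dots> = mkF G (\<lambda>x. x)"
    proof (rule mkF_cong)
      fix x assume x: "x \<in> carrier G"
      have "compose (carrier G) \<tau> \<sigma> x = (\<lambda>x\<in>carrier G. x) x" by (simp only: ts)
      then show "\<tau> (\<sigma> x) = x" using x by (simp add: compose_def)
    qed
    finally show ?thesis by (simp add: id_mkF)
  qed
  show ?thesis unfolding self_htpy_equiv_def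
    by (intro CollectI conjI exI[of _ "mkF G \<tau>"]) (simp_all only: c1 c2 m1 m2 htpc_refl)
qed

lemma htpc_auto: assumes "\<sigma> \<in> auto G" "qs_htpc AA AA (mkF G \<sigma>) F1"
  shows "\<exists>d\<in>carrier G. F1 = mkF G (\<lambda>x. \<sigma> x \<otimes> d)"
  using htpc_iff[OF auto_facts(2,3)[OF assms(1)]] assms(2) by (rule iffD1)

lemma in_class_auto: assumes "\<sigma> \<in> auto G"
  shows "\<exists>d\<in>carrier G. (SOME F1. F1 \<in> htpy_class AA (mkF G \<sigma>)) = mkF G (\<lambda>x. \<sigma> x \<otimes> d)"
proof -
  have "(SOME F1. F1 \<in> htpy_class AA (mkF G \<sigma>)) \<in> htpy_class AA (mkF G \<sigma>)"
    by (rule some_in[OF auto_she[OF assms]])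
  then have "qs_htpc AA AA (mkF G \<sigma>) (SOME F1. F1 \<in> htpy_class AA (mkF G \<sigma>))"
    unfolding htpy_class_def by blast
  then show ?thesis by (rule htpc_auto[OF assms])
qed

definition Phi where "Phi \<sigma> = htpy_class AA (mkF G \<sigma>)"

lemma Phi_mult: assumes s: "\<sigma> \<in> auto G" and t: "\<tau> \<in> auto G"
  shows "Phi (compose (carrier G) \<sigma> \<tau>) = Phi \<sigma> \<otimes>\<^bsub>haut AA\<^esub> Phi \<tau>"
proof -
  interpret AG: group "AutoGroup G" by (rule AutoGroup)
  obtain d1 where d1: "d1 \<in> carrier G" "(SOME F1. F1 \<in> Phi \<sigma>) = mkF G (\<lambda>x. \<sigma> x \<otimes> d1)"
    using in_class_auto[OF s] unfolding Phi_def by blast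
  obtain d2 where d2: "d2 \<in> carrier G" "(SOME F1. F1 \<in> Phi \<tau>) = mkF G (\<lambda>x. \<tau> x \<otimes> d2)"
    using in_class_auto[OF t] unfolding Phi_def by blast
  define \<rho> where "\<rho> = compose (carrier G) \<sigma> \<tau>"
  have r: "\<rho> \<in> auto G" unfolding \<rho>_def using AG.m_closed[of \<sigma> \<tau>] AG_carrier AG_mult[OF s t] s t by simp
  have tG: "(\<lambda>x. \<tau> x \<otimes> d2) \<in> carrier G \<rightarrow> carrier G"
  proof (rule Pi_I)
    fix x assume "x \<in> carrier G"
    then show "\<tau> x \<otimes> d2 \<in> carrier G" by (rule m_closed[OF funcset_mem[OF auto_facts(2)[OF t]] d2(1)])
  qed
  have sh: "\<sigma> (x \<otimes> y) = \<sigma> x \<otimes> \<sigma> y" if "x \<in> carrier G" "y \<in> carrier G" for x y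
    by (rule hom_mult[OF auto_facts(1)[OF s] that])
  have e1: "Phi \<sigma> \<otimes>\<^bsub>haut AA\<^esub> Phi \<tau> = htpy_class AA (mkF G (\<lambda>x. \<sigma> (\<tau> x \<otimes> d2) \<otimes> d1))"
    unfolding haut_mult d1(2) d2(2) comp_mkF[OF tG] by (rule refl)
  have e2: "mkF G (\<lambda>x. \<sigma> (\<tau> x \<otimes> d2) \<otimes> d1) = mkF G (\<lambda>x. \<rho> x \<otimes> (\<sigma> d2 \<otimes> d1))"
  proof (rule mkF_cong)
    fix x assume x: "x \<in> carrier G"
    have tx: "\<tau> x \<in> carrier G" using auto_facts(2)[OF t] x by (simp add: funcset_mem)
    have sc: "\<sigma> (\<tau> x) \<in> carrier G" "\<sigma> d2 \<in> carrier G" using auto_facts(2)[OF s] tx d2(1) by (simp_all add: funcset_mem)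
    have r1: "\<sigma> (\<tau> x \<otimes> d2) = \<sigma> (\<tau> x) \<otimes> \<sigma> d2" by (rule sh[OF tx d2(1)])
    have r2: "\<sigma> (\<tau> x) \<otimes> \<sigma> d2 \<otimes> d1 = \<sigma> (\<tau> x) \<otimes> (\<sigma> d2 \<otimes> d1)" by (rule m_assoc[OF sc d1(1)])
    have r3: "\<rho> x = \<sigma> (\<tau> x)" unfolding \<rho>_def using x by (simp add: compose_def)
    show "\<sigma> (\<tau> x \<otimes> d2) \<otimes> d1 = \<rho> x \<otimes> (\<sigma> d2 \<otimes> d1)" unfolding r1 r2 r3 by (rule refl)
  qed
  have e3: "htpy_class AA (mkF G (\<lambda>x. \<rho> x \<otimes> (\<sigma> d2 \<otimes> d1))) = Phi \<rho>"
    unfolding Phi_def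
  proof (rule class_eq[symmetric])
    have dd: "\<sigma> d2 \<otimes> d1 \<in> carrier G" by (rule m_closed[OF funcset_mem[OF auto_facts(2)[OF s] d2(1)] d1(1)])
    show "qs_htpc AA AA (mkF G \<rho>) (mkF G (\<lambda>x. \<rho> x \<otimes> (\<sigma> d2 \<otimes> d1)))"
      by (rule iffD2[OF htpc_iff[OF auto_facts(2,3)[OF r]]], rule bexI[where x="\<sigma> d2 \<otimes> d1"], rule refl, rule dd)
  qed
  have "Phi \<rho> = Phi \<sigma> \<otimes>\<^bsub>haut AA\<^esub> Phi \<tau>" unfolding e1 e2 e3 by (rule refl)
  then show ?thesis unfolding \<rho>_def .
qed

end


context group begin

lemma Phi_carrier: assumes s: "\<sigma> \<in> auto G" shows "Phi \<sigma> \<in> carrier (haut AA)"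
proof -
  have "htpy_class AA (mkF G \<sigma>) \<in> htpy_class AA ` self_htpy_equiv AA" by (rule imageI[OF auto_she[OF s]])
  then show ?thesis unfolding Phi_def haut_def by simp
qed

lemma Phi_inj: "inj_on Phi (auto G)"
proof (rule inj_onI)
  fix \<sigma> \<tau> assume s: "\<sigma> \<in> auto G" and t: "\<tau> \<in> auto G" and eq: "Phi \<sigma> = Phi \<tau>"
  have "mkF G \<tau> \<in> Phi \<tau>" unfolding Phi_def by (rule class_self[OF auto_she[OF t]])
  then have "mkF G \<tau> \<in> Phi \<sigma>" by (simp only: eq)
  then have "qs_htpc AA AA (mkF G \<sigma>) (mkF G \<tau>)" unfolding Phi_def htpy_class_def by blast
  from htpc_auto[OF s this] obtain d where d: "d \<in> carrier G" "mkF G \<tau> = mkF G (\<lambda>x. \<sigma> x \<otimes> d)" by blast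
  have e: "\<tau> x = \<sigma> x \<otimes> d" if "x \<in> carrier G" for x using mkF_inj[OF d(2) that] .
  have t1: "\<tau> \<one> = \<one>" by (rule hom_one[OF auto_facts(1)[OF t] is_group is_group])
  have s1: "\<sigma> \<one> = \<one>" by (rule hom_one[OF auto_facts(1)[OF s] is_group is_group])
  have "\<one> = \<one> \<otimes> d" using e[OF one_closed] t1 s1 by simp
  then have d1: "d = \<one>" using d(1) by simp
  show "\<sigma> = \<tau>"
  proof (rule extensionalityI[OF auto_facts(5)[OF s] auto_facts(5)[OF t]])
    fix x assume x: "x \<in> carrier G"
    have "\<sigma> x \<in> carrier G" by (rule funcset_mem[OF auto_facts(2)[OF s] x])
    then show "\<sigma> x = \<tau> x" using e[OF x] d1 by simp
  qed
qed

lemma Phi_surj: "Phi ` auto G = carrier (haut AA)"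
proof
  show "Phi ` auto G \<subseteq> carrier (haut AA)" using Phi_carrier by blast
  show "carrier (haut AA) \<subseteq> Phi ` auto G"
  proof
    fix U assume "U \<in> carrier (haut AA)"
    then obtain F where F: "F \<in> self_htpy_equiv AA" "U = htpy_class AA F" unfolding haut_def by auto
    from she_char[OF F(1)] obtain \<phi> where p: "\<phi> \<in> carrier G \<rightarrow> carrier G" "affP G \<phi>" "F = mkF G \<phi>"
      "(\<lambda>x\<in>carrier G. \<phi> x \<otimes> inv (\<phi> \<one>)) \<in> auto G" by blast
    define \<psi> where "\<psi> = (\<lambda>x\<in>carrier G. \<phi> x \<otimes> inv (\<phi> \<one>))"
    have c1: "inv (\<phi> \<one>) \<in> carrier G" by (rule inv_closed[OF funcset_mem[OF p(1) one_closed]])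
    have "mkF G \<psi> = mkF G (\<lambda>x. \<phi> x \<otimes> inv (\<phi> \<one>))" unfolding \<psi>_def by (rule mkF_cong) simp
    then have "qs_htpc AA AA F (mkF G \<psi>)" unfolding p(3)
      by (intro iffD2[OF htpc_iff[OF p(1,2)]] bexI[OF _ c1])
    then have "U = Phi \<psi>" unfolding F(2) Phi_def by (rule class_eq)
    moreover have "\<psi> \<in> auto G" unfolding \<psi>_def by (rule p(4))
    ultimately show "U \<in> Phi ` auto G" by blast
  qed
qed

lemma Phi_one: "Phi (\<lambda>x\<in>carrier G. x) = \<one>\<^bsub>haut AA\<^esub>"
proof -
  have "mkF G (\<lambda>x\<in>carrier G. x) = qs_id AA" unfolding id_mkF by (rule mkF_cong) simp
  then show ?thesis unfolding Phi_def haut_def by simp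
qed

lemma Phi_iso: "Phi \<in> iso (AutoGroup G) (haut AA)"
proof (rule isoI)
  show "Phi \<in> hom (AutoGroup G) (haut AA)"
  proof (rule homI)
    fix x assume "x \<in> carrier (AutoGroup G)"
    then show "Phi x \<in> carrier (haut AA)" unfolding AG_carrier by (rule Phi_carrier)
  next
    fix x y assume "x \<in> carrier (AutoGroup G)" "y \<in> carrier (AutoGroup G)"
    then have xy: "x \<in> auto G" "y \<in> auto G" unfolding AG_carrier .
    show "Phi (x \<otimes>\<^bsub>AutoGroup G\<^esub> y) = Phi x \<otimes>\<^bsub>haut AA\<^esub> Phi y"
      unfolding AG_mult[OF xy] by (rule Phi_mult[OF xy])
  qed
  show "bij_betw Phi (carrier (AutoGroup G)) (carrier (haut AA))"
    unfolding AG_carrier using Phi_inj Phi_surj by (rule bij_betw_imageI)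
qed

lemma main: "group (haut AA) \<and> haut AA \<cong> AutoGroup G"
proof
  interpret AG: group "AutoGroup G" by (rule AutoGroup)
  have "group ((haut AA)\<lparr>one := Phi \<one>\<^bsub>AutoGroup G\<^esub>\<rparr>)" by (rule AG.iso_imp_img_group[OF Phi_iso])
  moreover have "Phi \<one>\<^bsub>AutoGroup G\<^esub> = \<one>\<^bsub>haut AA\<^esub>" unfolding AG_one by (rule Phi_one)
  ultimately show "group (haut AA)" by simp
  show "haut AA \<cong> AutoGroup G" by (rule AG.iso_sym[OF is_isoI[OF Phi_iso]])
qed

end

theorem corollary4p8:
  fixes G :: "('a, 'b) monoid_scheme"
  assumes "group G" and "finite (carrier G)"
  shows "group (haut (jmath (group_scheme G))) \<and> haut (jmath (group_scheme G)) \<cong> AutoGroup G"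
  by (rule group.main[OF assms(1)])



end
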